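(* Let $(M_n)_{n\in\mathbb{N}}$ be a discrete-time martingale such that $\sup_{i\geq 1}\mathbb{E}[|M_i-M_{i-1}|]<+\infty$. Let $(\tau_k)_{k\geq 1}$ be an increasing sequence of positive random times, independent of $M$, and set $A_t:=\sum_{k=1}^{+\infty}1_{\{\tau_k\leq t\}}$. Assume $\mathbb{E}[A_t]<+\infty$ for every $t\geq 0$. Then the process $$Z_t:=M_0+\sum_{k=1}^{+\infty}(M_k-M_{k-1})1_{\{\tau_k\leq t\}}=M_{A_t}$$ is a step martingale with respect to its natural filtration, i.e. a martingale whose sample paths are step functions on every bounded interval.
   Context: A step martingale is a martingale whose paths have finitely many jumps on any bounded interval and are constant between them. *)

theory Defs
  imports "HOL-Probability.Probability"
begin

definition natural_filtration ::
  "'a measure \<Rightarrow> 't::linorder set \<Rightarrow> ('t \<Rightarrow> 'a \<Rightarrow> real) \<Rightarrow> 't \<Rightarrow> 'a measure" where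
  "natural_filtration P T X t =
     sigma (space P) {X s -` B \<inter> space P | s B. s \<in> T \<and> s \<le> t \<and> B \<in> sets borel}"

definition martingale_on ::
  "'a measure \<Rightarrow> ('t::linorder \<Rightarrow> 'a measure) \<Rightarrow> 't set \<Rightarrow> ('t \<Rightarrow> 'a \<Rightarrow> real) \<Rightarrow> bool" where
  "martingale_on P F T X \<longleftrightarrow>
     (\<forall>t\<in>T. subalgebra P (F t)) \<and>
     (\<forall>s\<in>T. \<forall>t\<in>T. s \<le> t \<longrightarrow> sets (F s) \<subseteq> sets (F t)) \<and>
     (\<forall>t\<in>T. X t \<in> borel_measurable (F t) \<and> integrable P (X t)) \<and>
     (\<forall>s\<in>T. \<forall>t\<in>T. s \<le> t \<longrightarrow>
        (AE \<omega> in P. real_cond_exp P (F s) (X t) \<omega> = X s \<omega>))"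

definition step_on :: "(real \<Rightarrow> 'b) \<Rightarrow> real set \<Rightarrow> bool" where
  "step_on f S \<longleftrightarrow> (\<exists>J. finite J \<and>
     (\<forall>x y. x \<in> S \<longrightarrow> y \<in> S \<longrightarrow> x \<le> y \<longrightarrow> {x..y} \<inter> J = {} \<longrightarrow> f x = f y))"

definition step_martingale :: "'a measure \<Rightarrow> (real \<Rightarrow> 'a \<Rightarrow> real) \<Rightarrow> bool" where
  "step_martingale P Z \<longleftrightarrow>
     martingale_on P (natural_filtration P {0..} Z) {0..} Z \<and>
     (AE \<omega> in P. \<forall>b\<ge>0. step_on (\<lambda>t. Z t \<omega>) {0..b})"

end

theory Submission
  imports Defs
begin

locale sm =
  fixes P :: "'a measure" and M :: "nat \<Rightarrow> 'a \<Rightarrow> real" and tau :: "nat \<Rightarrow> 'a \<Rightarrow> real"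
  assumes ps: "prob_space P"
    and mart: "martingale_on P (natural_filtration P UNIV M) UNIV M"
    and bnd: "\<exists>C. \<forall>i\<ge>1. (\<integral>\<omega>. \<bar>M i \<omega> - M (i - 1) \<omega>\<bar> \<partial>P) \<le> C"
    and taum: "\<forall>k\<ge>1. tau k \<in> borel_measurable P"
    and taumono: "\<forall>k\<ge>1. \<forall>\<omega>\<in>space P. 0 < tau k \<omega> \<and> tau k \<omega> \<le> tau (Suc k) \<omega>"
    and ind: "prob_space.indep_var P
           (PiM {1..} (\<lambda>_. borel)) (\<lambda>\<omega>. \<lambda>k\<in>{1..}. tau k \<omega>)
           (PiM UNIV (\<lambda>_. borel)) (\<lambda>\<omega> n. M n \<omega>)"
    and fin: "\<forall>t\<ge>0. (\<integral>\<^sup>+\<omega>. (\<Sum>k. ennreal (if 1 \<le> k \<and> tau k \<omega> \<le> t then 1 else 0)) \<partial>P) < \<infinity>"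
begin

interpretation p: prob_space P by (rule ps)

definition "FM n = natural_filtration P UNIV M n"
definition "T = (\<lambda>\<omega>. \<lambda>k\<in>{1::nat..}. tau k \<omega>)"
definition "Mv = (\<lambda>\<omega> n. M n \<omega>)"
definition "Dl j \<omega> = M (Suc j) \<omega> - M j \<omega>"
definition "Hg j = {T -` A \<inter> space P \<inter> D | A D. A \<in> sets (PiM {1::nat..} (\<lambda>_. borel)) \<and> D \<in> sets (FM j)}"
definition "H j = sigma (space P) (Hg j)"

lemma FM_gen: "{M s -` B \<inter> space P | s B. s \<in> (UNIV::nat set) \<and> s \<le> n \<and> B \<in> sets borel} \<subseteq> Pow (space P)"
  by auto

lemma space_FM[simp]: "space (FM n) = space P"
  unfolding FM_def natural_filtration_def by (simp add: space_measure_of_conv)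

lemma sets_FM: "sets (FM n) = sigma_sets (space P) {M s -` B \<inter> space P | s B. s \<in> (UNIV::nat set) \<and> s \<le> n \<and> B \<in> sets borel}"
  unfolding FM_def natural_filtration_def by (rule sets_measure_of) auto

lemma subalg_FM: "subalgebra P (FM n)" and M_FM: "M n \<in> borel_measurable (FM n)"
  and M_int: "integrable P (M n)"
  using mart unfolding martingale_on_def FM_def by auto

lemma sets_FM_P: "sets (FM n) \<subseteq> sets P" using subalg_FM unfolding subalgebra_def by auto

lemma M_meas[measurable]: "M n \<in> borel_measurable P"
  using M_FM subalg_FM measurable_from_subalg by blast

lemma M_FM_le: "i \<le> n \<Longrightarrow> M i \<in> borel_measurable (FM n)"
  apply (rule measurableI)
   apply simp
  apply (simp add: sets_FM)
  apply (rule sigma_sets.Basic) by auto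

lemma tau_meas[measurable]: "1 \<le> k \<Longrightarrow> tau k \<in> borel_measurable P"
  using taum by auto

lemma tau_Suc_meas[measurable]: "tau (Suc k) \<in> borel_measurable P"
  using taum by auto

lemma cond: "AE \<omega> in P. real_cond_exp P (FM j) (M (Suc j)) \<omega> = M j \<omega>"
  using mart unfolding martingale_on_def FM_def by auto

lemma sfs_FM: "sigma_finite_subalgebra P (FM j)"
  apply (rule finite_measure_subalgebra_is_sigma_finite)
  unfolding finite_measure_subalgebra_def finite_measure_subalgebra_axioms_def
  using subalg_FM p.finite_measure_axioms by auto

lemma int_ind: "A \<in> sets P \<Longrightarrow> integrable P f \<Longrightarrow> integrable P (\<lambda>x. indicator A x * (f x::real))"
  using integrable_mult_indicator[of A P f] by simp

lemma Dl_int: "integrable P (Dl j)" unfolding Dl_def using M_int by auto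

lemma Dl_zero: "D \<in> sets (FM j) \<Longrightarrow> (\<integral>\<omega>. indicator D \<omega> * Dl j \<omega> \<partial>P) = 0"
proof -
  assume D: "D \<in> sets (FM j)"
  interpret s: sigma_finite_subalgebra P "FM j" by (rule sfs_FM)
  have "(\<integral>x\<in>D. M (Suc j) x \<partial>P) = (\<integral>x\<in>D. real_cond_exp P (FM j) (M (Suc j)) x \<partial>P)"
    by (rule s.real_cond_exp_intA[OF M_int D])
  also have "\<dots> = (\<integral>x\<in>D. M j x \<partial>P)"
    unfolding set_lebesgue_integral_def
    apply (rule integral_cong_AE)
    using D sets_FM_P apply (auto intro!: borel_measurable_times borel_measurable_indicator)
    using cond[of j] by eventually_elim auto
  finally have "(\<integral>x\<in>D. M (Suc j) x \<partial>P) = (\<integral>x\<in>D. M j x \<partial>P)" .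
  moreover have "(\<integral>\<omega>. indicator D \<omega> * Dl j \<omega> \<partial>P) = (\<integral>x\<in>D. M (Suc j) x \<partial>P) - (\<integral>x\<in>D. M j x \<partial>P)"
    unfolding set_lebesgue_integral_def Dl_def
    apply (subst Bochner_Integration.integral_diff[symmetric])
    using D sets_FM_P by (auto intro!: int_ind M_int simp: algebra_simps)
  ultimately show ?thesis by simp
qed

lemma T_meas[measurable]: "T \<in> measurable P (PiM {1::nat..} (\<lambda>_. borel))"
  unfolding T_def by (rule measurable_restrict) auto

lemma Mv_meas[measurable]: "Mv \<in> measurable P (PiM UNIV (\<lambda>_::nat. borel))"
proof -
  have "(\<lambda>\<omega>. \<lambda>i\<in>UNIV. M i \<omega>) \<in> measurable P (PiM UNIV (\<lambda>_::nat. borel))"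
    by (rule measurable_restrict) auto
  moreover have "(\<lambda>\<omega>. \<lambda>i\<in>UNIV. M i \<omega>) = (\<lambda>\<omega> n. M n \<omega>)" by (auto simp: restrict_def)
  ultimately show ?thesis unfolding Mv_def by simp
qed

lemma FM_vimage: "D \<in> sets (FM j) \<Longrightarrow> \<exists>D'\<in>sets (PiM UNIV (\<lambda>_::nat. borel)). D = Mv -` D' \<inter> space P"
proof -
  assume D: "D \<in> sets (FM j)"
  let ?V = "vimage_algebra (space P) Mv (PiM UNIV (\<lambda>_::nat. borel))"
  have "{M s -` B \<inter> space P | s B. s \<in> (UNIV::nat set) \<and> s \<le> j \<and> B \<in> sets borel} \<subseteq> sets ?V"
  proof safe
    fix s and B :: "real set" assume B: "B \<in> sets borel"
    have "(\<lambda>x. x s) -` B \<inter> space (PiM UNIV (\<lambda>_::nat. borel)) \<in> sets (PiM UNIV (\<lambda>_::nat. borel))"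
      using measurable_component_singleton[of s UNIV "\<lambda>_. borel"] B by (rule measurable_sets) auto
    then have "Mv -` ((\<lambda>x. x s) -` B \<inter> space (PiM UNIV (\<lambda>_::nat. borel))) \<inter> space P \<in> sets ?V"
      by (rule in_vimage_algebra)
    moreover have "Mv -` ((\<lambda>x. x s) -` B \<inter> space (PiM UNIV (\<lambda>_::nat. borel))) \<inter> space P = M s -` B \<inter> space P"
      by (auto simp: Mv_def space_PiM)
    ultimately show "M s -` B \<inter> space P \<in> sets ?V" by simp
  qed
  then have "sigma_sets (space ?V) {M s -` B \<inter> space P | s B. s \<in> (UNIV::nat set) \<and> s \<le> j \<and> B \<in> sets borel} \<subseteq> sets ?V"
    by (rule sets.sigma_sets_subset)
  then have "D \<in> sets ?V" using D by (simp add: sets_FM) blast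
  moreover have "Mv \<in> space P \<rightarrow> space (PiM UNIV (\<lambda>_::nat. borel))" by (auto simp: space_PiM)
  ultimately show ?thesis by (auto simp: sets_vimage_algebra2)
qed

lemma gen_zero:
  assumes A: "A \<in> sets (PiM {1::nat..} (\<lambda>_. borel))" and D: "D \<in> sets (FM j)"
  shows "(\<integral>\<omega>. indicator (T -` A \<inter> space P \<inter> D) \<omega> * Dl j \<omega> \<partial>P) = 0"
proof -
  obtain D' where D': "D' \<in> sets (PiM UNIV (\<lambda>_::nat. borel))" "D = Mv -` D' \<inter> space P"
    using FM_vimage[OF D] by blast
  define X1 where "X1 = (\<lambda>\<omega>. indicator A (T \<omega>) :: real)"
  define X2 where "X2 = (\<lambda>\<omega>. indicator D' (Mv \<omega>) * (Mv \<omega> (Suc j) - Mv \<omega> j) :: real)"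
  have iv: "p.indep_var borel ((\<lambda>x. indicator A x :: real) \<circ> T) borel ((\<lambda>x. indicator D' x * (x (Suc j) - x j) :: real) \<circ> Mv)"
    apply (rule p.indep_var_compose[OF ind[folded T_def Mv_def]])
    using A D' by measurable
  then have iv': "p.indep_var borel X1 borel X2" unfolding X1_def X2_def comp_def .
  have m1[measurable]: "X1 \<in> borel_measurable P" unfolding X1_def
    by (rule measurable_compose[OF T_meas borel_measurable_indicator[OF A]])
  have i1: "integrable P X1"
    by (rule p.integrable_const_bound[where B=1, OF _ m1]) (auto simp: X1_def indicator_def)
  have e2: "\<And>\<omega>. \<omega> \<in> space P \<Longrightarrow> X2 \<omega> = indicator D \<omega> * Dl j \<omega>"
    by (auto simp: X2_def D' Mv_def Dl_def indicator_def)
  have DP: "D \<in> sets P" using D sets_FM_P by auto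
  have i2': "integrable P (\<lambda>\<omega>. indicator D \<omega> * Dl j \<omega>)" by (rule int_ind[OF DP Dl_int])
  have i2: "integrable P X2" using i2' by (subst Bochner_Integration.integrable_cong[OF refl e2]) auto
  have E2: "(\<integral>\<omega>. X2 \<omega> \<partial>P) = 0"
    using Dl_zero[OF D] by (subst Bochner_Integration.integral_cong[OF refl e2]) auto
  have "(\<integral>\<omega>. indicator (T -` A \<inter> space P \<inter> D) \<omega> * Dl j \<omega> \<partial>P) = (\<integral>\<omega>. X1 \<omega> * X2 \<omega> \<partial>P)"
    by (rule Bochner_Integration.integral_cong) (auto simp: e2 X1_def indicator_def)
  also have "\<dots> = (\<integral>\<omega>. X1 \<omega> \<partial>P) * (\<integral>\<omega>. X2 \<omega> \<partial>P)"
    by (rule p.indep_var_lebesgue_integral[OF iv' i1 i2])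
  finally show ?thesis using E2 by simp
qed

lemma Hg_pow: "Hg j \<subseteq> Pow (space P)" unfolding Hg_def by auto

lemma sets_H: "sets (H j) = sigma_sets (space P) (Hg j)"
  unfolding H_def using Hg_pow by (rule sets_measure_of)

lemma space_H[simp]: "space (H j) = space P"
  unfolding H_def using Hg_pow by (simp add: space_measure_of_conv)

lemma Hg_P: "Hg j \<subseteq> sets P"
  unfolding Hg_def using sets_FM_P by (auto intro!: sets.Int measurable_sets[OF T_meas])

lemma sets_H_P: "sets (H j) \<subseteq> sets P"
  unfolding sets_H using Hg_P by (rule sets.sigma_sets_subset)

lemma Hg_Int: "Int_stable (Hg j)"
  unfolding Int_stable_def Hg_def
proof safe
  fix A A' :: "(nat \<Rightarrow> real) set" and D D' assume "A \<in> sets (PiM {1::nat..} (\<lambda>_. borel))" "D \<in> sets (FM j)"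
    "A' \<in> sets (PiM {1::nat..} (\<lambda>_. borel))" "D' \<in> sets (FM j)"
  moreover have "T -` A \<inter> space P \<inter> D \<inter> (T -` A' \<inter> space P \<inter> D') = T -` (A \<inter> A') \<inter> space P \<inter> (D \<inter> D')"
    by auto
  ultimately show "\<exists>A'' D''. T -` A \<inter> space P \<inter> D \<inter> (T -` A' \<inter> space P \<inter> D') = T -` A'' \<inter> space P \<inter> D'' \<and>
      A'' \<in> sets (PiM {1::nat..} (\<lambda>_. borel)) \<and> D'' \<in> sets (FM j)"
    by blast
qed

lemma Dl_total: "(\<integral>\<omega>. Dl j \<omega> \<partial>P) = 0"
proof -
  have "(\<integral>\<omega>. indicator (T -` space (PiM {1::nat..} (\<lambda>_. borel)) \<inter> space P \<inter> space (FM j)) \<omega> * Dl j \<omega> \<partial>P) = 0"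
    by (rule gen_zero[OF sets.top sets.top])
  moreover have "T -` space (PiM {1::nat..} (\<lambda>_. borel)) \<inter> space P \<inter> space (FM j) = space P"
    using measurable_space[OF T_meas] by auto
  ultimately show ?thesis
    by (subst (asm) Bochner_Integration.integral_cong[OF refl, where g="Dl j"]) auto
qed

lemma H_zero:
  assumes C: "C \<in> sets (H j)"
  shows "(\<integral>\<omega>. indicator C \<omega> * Dl j \<omega> \<partial>P) = 0"
proof -
  have "C \<in> sigma_sets (space P) (Hg j)" using C sets_H by auto
  then show ?thesis
  proof (rule sigma_sets_induct_disjoint[OF Hg_Int Hg_pow, where P="\<lambda>C. (\<integral>\<omega>. indicator C \<omega> * Dl j \<omega> \<partial>P) = 0"])
    fix A assume "A \<in> Hg j"
    then show "(\<integral>\<omega>. indicator A \<omega> * Dl j \<omega> \<partial>P) = 0" unfolding Hg_def using gen_zero by auto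
  next
    show "(\<integral>\<omega>. indicator {} \<omega> * Dl j \<omega> \<partial>P) = 0" by simp
  next
    fix A assume compl: "A \<in> sigma_sets (space P) (Hg j)" "(\<integral>\<omega>. indicator A \<omega> * Dl j \<omega> \<partial>P) = 0"
    have AP: "A \<in> sets P" using compl(1) Hg_P sets.sigma_sets_subset by blast
    have "(\<integral>\<omega>. indicator (space P - A) \<omega> * Dl j \<omega> \<partial>P) = (\<integral>\<omega>. Dl j \<omega> - indicator A \<omega> * Dl j \<omega> \<partial>P)"
      by (rule Bochner_Integration.integral_cong) (auto simp: indicator_def)
    also have "\<dots> = (\<integral>\<omega>. Dl j \<omega> \<partial>P) - (\<integral>\<omega>. indicator A \<omega> * Dl j \<omega> \<partial>P)"
      by (rule Bochner_Integration.integral_diff[OF Dl_int int_ind[OF AP Dl_int]])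
    finally show "(\<integral>\<omega>. indicator (space P - A) \<omega> * Dl j \<omega> \<partial>P) = 0" using compl(2) Dl_total by simp
  next
    fix A :: "nat \<Rightarrow> 'a set" assume union: "disjoint_family A" "range A \<subseteq> sigma_sets (space P) (Hg j)"
      "\<And>i. (\<integral>\<omega>. indicator (A i) \<omega> * Dl j \<omega> \<partial>P) = 0"
    have AP: "\<And>i. A i \<in> sets P" using union(2) Hg_P sets.sigma_sets_subset by blast
    define B where "B n = (\<Union>i\<in>{..<n}. A i)" for n
    have BP: "\<And>n. B n \<in> sets P" unfolding B_def using AP by auto
    have B0: "(\<integral>\<omega>. indicator (B n) \<omega> * Dl j \<omega> \<partial>P) = 0" for n
    proof (induction n)
      case 0 then show ?case by (simp add: B_def)
    next
      case (Suc n)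
      have dj: "B n \<inter> A n = {}" using union(1) unfolding B_def disjoint_family_on_def by (auto, metis disjoint_iff less_irrefl)
      have "B (Suc n) = B n \<union> A n" unfolding B_def by (auto simp: lessThan_Suc)
      then have "(\<integral>\<omega>. indicator (B (Suc n)) \<omega> * Dl j \<omega> \<partial>P) =
          (\<integral>\<omega>. indicator (B n) \<omega> * Dl j \<omega> + indicator (A n) \<omega> * Dl j \<omega> \<partial>P)"
        using dj by (simp add: indicator_disj_union distrib_right)
      also have "\<dots> = (\<integral>\<omega>. indicator (B n) \<omega> * Dl j \<omega> \<partial>P) + (\<integral>\<omega>. indicator (A n) \<omega> * Dl j \<omega> \<partial>P)"
        by (rule Bochner_Integration.integral_add[OF int_ind[OF BP Dl_int] int_ind[OF AP Dl_int]])
      finally show ?case using Suc union(3) by simp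
    qed
    have UB: "(\<Union>n. B n) = (\<Union>i. A i)" unfolding B_def using lessI by blast
    have incB: "incseq B"
    proof (rule incseq_SucI)
      fix n show "B n \<subseteq> B (Suc n)" unfolding B_def by (auto simp: lessThan_Suc)
    qed
    have "(\<lambda>n. LINT x:(B n)|P. Dl j x) \<longlonglongrightarrow> (LINT x:(\<Union>n. B n)|P. Dl j x)"
      apply (rule set_integral_cont_up[OF BP incB])
      unfolding UB set_integrable_def using int_ind[OF _ Dl_int, of "\<Union>i. A i"] AP by auto
    moreover have "(\<lambda>n. LINT x:(B n)|P. Dl j x) = (\<lambda>n. 0)"
      using B0 by (simp add: set_lebesgue_integral_def)
    ultimately have "(\<lambda>n. 0::real) \<longlonglongrightarrow> (LINT x:(\<Union>n. B n)|P. Dl j x)" by simp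
    then have "(LINT x:(\<Union>n. B n)|P. Dl j x) = 0" by (simp add: LIMSEQ_const_iff)
    then show "(\<integral>\<omega>. indicator (\<Union>i. A i) \<omega> * Dl j \<omega> \<partial>P) = 0" unfolding UB by (simp add: set_lebesgue_integral_def)
  qed
qed

lemma FM_H: "sets (FM j) \<subseteq> sets (H j)"
proof
  fix D assume D: "D \<in> sets (FM j)"
  have "T -` space (PiM {1::nat..} (\<lambda>_. borel)) \<inter> space P \<inter> D \<in> Hg j"
    unfolding Hg_def using D by blast
  moreover have "T -` space (PiM {1::nat..} (\<lambda>_. borel)) \<inter> space P \<inter> D = D"
    using measurable_space[OF T_meas] sets.sets_into_space[OF D] by auto
  ultimately show "D \<in> sets (H j)" unfolding sets_H by (metis sigma_sets.Basic)
qed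

lemma subalg_H_FM: "subalgebra (H j) (FM j)"
  unfolding subalgebra_def using FM_H by simp

lemma M_H: "i \<le> j \<Longrightarrow> M i \<in> borel_measurable (H j)"
  using M_FM_le measurable_from_subalg subalg_H_FM by blast

lemma T_H: "T \<in> measurable (H j) (PiM {1::nat..} (\<lambda>_. borel))"
proof (rule measurableI)
  fix x assume "x \<in> space (H j)" then show "T x \<in> space (PiM {1::nat..} (\<lambda>_. borel))"
    using measurable_space[OF T_meas] by auto
next
  fix A :: "(nat \<Rightarrow> real) set" assume A: "A \<in> sets (PiM {1::nat..} (\<lambda>_. borel))"
  have "T -` A \<inter> space P \<inter> space P \<in> Hg j" unfolding Hg_def using A
    by (metis (mono_tags, lifting) mem_Collect_eq sets.top space_FM)
  then show "T -` A \<inter> space (H j) \<in> sets (H j)" unfolding sets_H by (simp add: sigma_sets.Basic)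
qed

lemma tau_H: "1 \<le> k \<Longrightarrow> tau k \<in> borel_measurable (H j)"
proof -
  assume k: "1 \<le> k"
  have "(\<lambda>x. x k) \<circ> T \<in> borel_measurable (H j)"
    by (rule measurable_comp[OF T_H measurable_component_singleton]) (use k in auto)
  moreover have "(\<lambda>x. x k) \<circ> T = tau k" using k by (auto simp: T_def)
  ultimately show ?thesis by simp
qed

lemma tau_mono: assumes "\<omega> \<in> space P" "1 \<le> k" "k \<le> k'" shows "tau k \<omega> \<le> tau k' \<omega>"
  using assms(3)
proof (induction k' rule: dec_induct)
  case base then show ?case by simp
next
  case (step n)
  have "1 \<le> n" using step(1) assms(2) by simp
  then have "tau n \<omega> \<le> tau (Suc n) \<omega>" using taumono assms(1) by blast
  then show ?case using step(3) by simp
qed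

definition "Z = (\<lambda>t \<omega>. M 0 \<omega> + (\<Sum>k. (M (Suc k) \<omega> - M k \<omega>) * (if tau (Suc k) \<omega> \<le> t then 1 else 0)))"
definition "FZ s = natural_filtration P {0..} Z s"
definition "GZ s = {Z r -` B \<inter> space P | r B. r \<in> {0::real..} \<and> r \<le> s \<and> B \<in> sets borel}"

lemma sets_FZ: "sets (FZ s) = sigma_sets (space P) (GZ s)"
  unfolding FZ_def natural_filtration_def GZ_def by (rule sets_measure_of) auto

lemma space_FZ[simp]: "space (FZ s) = space P"
  unfolding FZ_def natural_filtration_def by (simp add: space_measure_of_conv)

lemma Z_fin:
  assumes "\<omega> \<in> space P" "r < tau (Suc j) \<omega>"
  shows "Z r \<omega> = M 0 \<omega> + (\<Sum>k<j. (M (Suc k) \<omega> - M k \<omega>) * (if tau (Suc k) \<omega> \<le> r then 1 else 0))"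
proof -
  have "(\<Sum>k. (M (Suc k) \<omega> - M k \<omega>) * (if tau (Suc k) \<omega> \<le> r then 1 else 0)) =
        (\<Sum>k<j. (M (Suc k) \<omega> - M k \<omega>) * (if tau (Suc k) \<omega> \<le> r then 1 else 0))"
  proof (rule suminf_finite)
    fix k assume "k \<notin> {..<j}"
    then have "tau (Suc j) \<omega> \<le> tau (Suc k) \<omega>" by (intro tau_mono[OF assms(1)]) auto
    then show "(M (Suc k) \<omega> - M k \<omega>) * (if tau (Suc k) \<omega> \<le> r then 1 else 0) = 0" using assms(2) by auto
  qed auto
  then show ?thesis unfolding Z_def by simp
qed

lemma trace:
  assumes B: "B \<in> sets (FZ s)"
  shows "B \<inter> {\<omega>\<in>space P. s < tau (Suc j) \<omega>} \<in> sets (H j)"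
proof -
  define S where "S = {\<omega>\<in>space P. s < tau (Suc j) \<omega>}"
  have tH[measurable]: "\<And>k. tau (Suc k) \<in> borel_measurable (H j)" using tau_H by auto
  have MH[measurable]: "\<And>k. k \<le> j \<Longrightarrow> M k \<in> borel_measurable (H j)" using M_H by auto
  have "S = tau (Suc j) -` {s<..} \<inter> space (H j)" unfolding S_def by auto
  then have SH: "S \<in> sets (H j)" using measurable_sets[OF tH[of j], of "{s<..}"] by simp
  have "B \<in> sigma_sets (space P) (GZ s)" using B sets_FZ by auto
  then have "B \<inter> S \<in> sets (H j)"
  proof (induction rule: sigma_sets.induct)
    case (Basic a)
    then obtain r U where rU: "r \<in> {0::real..}" "r \<le> s" "U \<in> sets borel" "a = Z r -` U \<inter> space P"
      unfolding GZ_def by blast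
    define W where "W = (\<lambda>\<omega>. M 0 \<omega> + (\<Sum>k<j. (M (Suc k) \<omega> - M k \<omega>) * (if tau (Suc k) \<omega> \<le> r then 1 else 0)))"
    have IH: "(\<lambda>\<omega>. if tau (Suc k) \<omega> \<le> r then 1 else 0 :: real) \<in> borel_measurable (H j)" for k
    proof -
      have "{\<omega> \<in> space (H j). tau (Suc k) \<omega> \<le> r} = tau (Suc k) -` {..r} \<inter> space (H j)" by auto
      then have "{\<omega> \<in> space (H j). tau (Suc k) \<omega> \<le> r} \<in> sets (H j)"
        using measurable_sets[OF tH[of k], of "{..r}"] by simp
      then have "(\<lambda>\<omega>. indicator {\<omega> \<in> space (H j). tau (Suc k) \<omega> \<le> r} \<omega> :: real) \<in> borel_measurable (H j)"
        by (rule borel_measurable_indicator)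
      moreover have "\<And>\<omega>. \<omega> \<in> space (H j) \<Longrightarrow> indicator {\<omega> \<in> space (H j). tau (Suc k) \<omega> \<le> r} \<omega> = (if tau (Suc k) \<omega> \<le> r then 1 else 0 :: real)"
        by (auto simp: indicator_def)
      ultimately show ?thesis using measurable_cong by fastforce
    qed
    have WH: "W \<in> borel_measurable (H j)" unfolding W_def
      by (intro borel_measurable_add borel_measurable_sum borel_measurable_times borel_measurable_diff MH IH) auto
    have eq: "Z r \<omega> = W \<omega>" if "\<omega> \<in> S" for \<omega>
    proof -
      have w: "\<omega> \<in> space P" "s < tau (Suc j) \<omega>" using that by (auto simp: S_def)
      then have "r < tau (Suc j) \<omega>" using rU(2) by linarith
      then show ?thesis using Z_fin[OF w(1)] by (simp add: W_def)
    qed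
    have "a \<inter> S = (W -` U \<inter> space (H j)) \<inter> S"
      using eq rU(4) unfolding S_def by auto
    then show ?case using measurable_sets[OF WH rU(3)] SH by auto
  next
    case Empty then show ?case by simp
  next
    case (Compl a)
    have "(space P - a) \<inter> S = S - (a \<inter> S)" unfolding S_def by auto
    then show ?case using Compl SH by auto
  next
    case (Union a)
    have "(\<Union>i. a i) \<inter> S = (\<Union>i. a i \<inter> S)" by auto
    moreover have "(\<Union>i. a i \<inter> S) \<in> sets (H j)"
      using sets.countable_UN[of "\<lambda>i. a i \<inter> S" UNIV "H j"] Union(2) by auto
    ultimately show ?case by simp
  qed
  then show ?thesis unfolding S_def .
qed

definition "Ev t k = {\<omega> \<in> space P. 1 \<le> k \<and> tau k \<omega> \<le> t}"

lemma Ev_sets[measurable]: "Ev t k \<in> sets P"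
proof (cases "1 \<le> k")
  case True
  have "Ev t k = tau k -` {..t} \<inter> space P" unfolding Ev_def using True by auto
  then show ?thesis using measurable_sets[OF tau_meas[OF True], of "{..t}"] by simp
next
  case False then show ?thesis unfolding Ev_def by simp
qed

lemma fin_int: assumes "0 \<le> t" shows "(\<integral>\<^sup>+\<omega>. (\<Sum>k. indicator (Ev t k) \<omega>) \<partial>P) < \<infinity>"
proof -
  have "(\<integral>\<^sup>+\<omega>. (\<Sum>k. indicator (Ev t k) \<omega>) \<partial>P) = (\<integral>\<^sup>+\<omega>. (\<Sum>k. ennreal (if 1 \<le> k \<and> tau k \<omega> \<le> t then 1 else 0)) \<partial>P)"
  proof (rule nn_integral_cong)
    fix \<omega> assume "\<omega> \<in> space P"
    then have "\<And>k. indicator (Ev t k) \<omega> = ennreal (if 1 \<le> k \<and> tau k \<omega> \<le> t then 1 else 0)"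
      by (auto simp: Ev_def)
    then show "(\<Sum>k. indicator (Ev t k) \<omega>) = (\<Sum>k. ennreal (if 1 \<le> k \<and> tau k \<omega> \<le> t then 1 else 0))"
      by simp
  qed
  then show ?thesis using fin assms by simp
qed

lemma sum_prob: assumes "0 \<le> t" shows "summable (\<lambda>k. measure P (Ev t (Suc k)))"
proof -
  have "(\<integral>\<^sup>+\<omega>. (\<Sum>k. indicator (Ev t k) \<omega>) \<partial>P) = (\<Sum>k. \<integral>\<^sup>+\<omega>. indicator (Ev t k) \<omega> \<partial>P)"
    by (rule nn_integral_suminf) auto
  also have "\<dots> = (\<Sum>k. ennreal (measure P (Ev t k)))"
    by (simp add: p.emeasure_eq_measure)
  finally have "(\<Sum>k. ennreal (measure P (Ev t k))) \<noteq> top" using fin_int[OF assms] by auto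
  then have "summable (\<lambda>k. measure P (Ev t k))" by (intro summable_suminf_not_top) auto
  then show ?thesis using summable_ignore_initial_segment[of _ 1] by simp
qed

lemma fin_AE: "AE \<omega> in P. \<forall>n::nat. finite {k. tau (Suc k) \<omega> \<le> real n}"
proof (rule AE_all_countable[THEN iffD2], rule allI)
  fix n :: nat
  define t where "t = real n"
  have t: "0 \<le> t" unfolding t_def by simp
  have "AE \<omega> in P. (\<Sum>k. indicator (Ev t k) \<omega>) \<noteq> (\<infinity>::ennreal)"
    by (rule nn_integral_PInf_AE) (use fin_int[OF t] in auto)
  then show "AE \<omega> in P. finite {k. tau (Suc k) \<omega> \<le> real n}"
  proof (rule AE_mp[OF _ AE_I2[OF impI]])
    fix \<omega> assume sp: "\<omega> \<in> space P" and ne: "(\<Sum>k. indicator (Ev t k) \<omega>) \<noteq> (\<infinity>::ennreal)"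
    have "(\<Sum>k. ennreal (indicator (Ev t k) \<omega>)) \<noteq> top" using ne by (simp add: ennreal_indicator)
    then have "summable (\<lambda>k. indicator (Ev t k) \<omega> :: real)" by (intro summable_suminf_not_top) auto
    then have "(\<lambda>k. indicator (Ev t k) \<omega> :: real) \<longlonglongrightarrow> 0" by (rule summable_LIMSEQ_zero)
    then have "eventually (\<lambda>k. indicator (Ev t k) \<omega> < (1::real)) sequentially"
      by (rule order_tendstoD) simp
    then obtain N where N: "\<And>k. k \<ge> N \<Longrightarrow> indicator (Ev t k) \<omega> < (1::real)"
      unfolding eventually_sequentially by blast
    have "{k. tau (Suc k) \<omega> \<le> real n} \<subseteq> {..<N}"
    proof
      fix k assume k: "k \<in> {k. tau (Suc k) \<omega> \<le> real n}"
      then have "\<omega> \<in> Ev t (Suc k)" using sp by (auto simp: Ev_def t_def)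
      then have "\<not> (Suc k \<ge> N)" using N[of "Suc k"] by (auto simp: indicator_def)
      then show "k \<in> {..<N}" by simp
    qed
    then show "finite {k. tau (Suc k) \<omega> \<le> real n}" by (rule finite_subset) simp
  qed
qed

lemma fin_t: assumes "\<forall>n::nat. finite {k. tau (Suc k) \<omega> \<le> real n}"
  shows "finite {k. tau (Suc k) \<omega> \<le> t}"
proof -
  have "{k. tau (Suc k) \<omega> \<le> t} \<subseteq> {k. tau (Suc k) \<omega> \<le> real (nat \<lceil>t\<rceil>)}"
    using real_nat_ceiling_ge[of t] by auto
  then show ?thesis using assms finite_subset by blast
qed

lemma absDl_int: "integrable P (\<lambda>\<omega>. \<bar>Dl k \<omega>\<bar>)" using Dl_int by auto

lemma indep_E: "(\<integral>\<omega>. indicator (Ev t (Suc k)) \<omega> * \<bar>Dl k \<omega>\<bar> \<partial>P) = measure P (Ev t (Suc k)) * (\<integral>\<omega>. \<bar>Dl k \<omega>\<bar> \<partial>P)"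
proof -
  define A' where "A' = (\<lambda>x::nat\<Rightarrow>real. x (Suc k)) -` {..t} \<inter> space (PiM {1::nat..} (\<lambda>_. borel))"
  have A': "A' \<in> sets (PiM {1::nat..} (\<lambda>_. borel))" unfolding A'_def
    by (rule measurable_sets[OF measurable_component_singleton]) auto
  define X1 where "X1 = (\<lambda>\<omega>. indicator A' (T \<omega>) :: real)"
  define X2 where "X2 = (\<lambda>\<omega>. \<bar>Mv \<omega> (Suc k) - Mv \<omega> k\<bar>)"
  have g2: "(\<lambda>x::nat\<Rightarrow>real. \<bar>x (Suc k) - x k\<bar>) \<in> borel_measurable (PiM UNIV (\<lambda>_. borel))"
    by measurable
  have iv: "p.indep_var borel ((\<lambda>x. indicator A' x :: real) \<circ> T) borel ((\<lambda>x::nat\<Rightarrow>real. \<bar>x (Suc k) - x k\<bar>) \<circ> Mv)"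
    by (rule p.indep_var_compose[OF ind[folded T_def Mv_def] borel_measurable_indicator[OF A'] g2])
  then have iv': "p.indep_var borel X1 borel X2" unfolding X1_def X2_def comp_def .
  have e1: "\<And>\<omega>. \<omega> \<in> space P \<Longrightarrow> X1 \<omega> = indicator (Ev t (Suc k)) \<omega>"
    using measurable_space[OF T_meas] by (auto simp: X1_def A'_def Ev_def T_def indicator_def)
  have e2: "\<And>\<omega>. \<omega> \<in> space P \<Longrightarrow> X2 \<omega> = \<bar>Dl k \<omega>\<bar>"
    by (auto simp: X2_def Mv_def Dl_def)
  have i1: "integrable P X1"
    by (subst Bochner_Integration.integrable_cong[OF refl e1])
      (auto intro!: integrable_real_indicator simp: less_top[symmetric] p.emeasure_finite)
  have i2: "integrable P X2"
    by (subst Bochner_Integration.integrable_cong[OF refl e2]) (auto intro: absDl_int)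
  have "(\<integral>\<omega>. indicator (Ev t (Suc k)) \<omega> * \<bar>Dl k \<omega>\<bar> \<partial>P) = (\<integral>\<omega>. X1 \<omega> * X2 \<omega> \<partial>P)"
    by (rule Bochner_Integration.integral_cong) (auto simp: e1 e2)
  also have "\<dots> = (\<integral>\<omega>. X1 \<omega> \<partial>P) * (\<integral>\<omega>. X2 \<omega> \<partial>P)"
    by (rule p.indep_var_lebesgue_integral[OF iv' i1 i2])
  also have "(\<integral>\<omega>. X1 \<omega> \<partial>P) = measure P (Ev t (Suc k))"
    by (subst Bochner_Integration.integral_cong[OF refl e1]) auto
  also have "(\<integral>\<omega>. X2 \<omega> \<partial>P) = (\<integral>\<omega>. \<bar>Dl k \<omega>\<bar> \<partial>P)"
    by (subst Bochner_Integration.integral_cong[OF refl e2]) auto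
  finally show ?thesis .
qed

lemma Dl_bnd: obtains C where "\<And>k. (\<integral>\<omega>. \<bar>Dl k \<omega>\<bar> \<partial>P) \<le> C"
proof -
  obtain C where C: "\<forall>i\<ge>1. (\<integral>\<omega>. \<bar>M i \<omega> - M (i - 1) \<omega>\<bar> \<partial>P) \<le> C" using bnd by blast
  have "(\<integral>\<omega>. \<bar>Dl k \<omega>\<bar> \<partial>P) \<le> C" for k
    using C[rule_format, of "Suc k"] by (simp add: Dl_def)
  then show ?thesis using that by blast
qed

lemma sum_int:
  assumes t: "0 \<le> t" and B: "B \<in> sets P"
  shows "integrable P (\<lambda>\<omega>. \<Sum>k. indicator (B \<inter> Ev t (Suc k)) \<omega> * Dl k \<omega>)"
    and "(\<integral>\<omega>. (\<Sum>k. indicator (B \<inter> Ev t (Suc k)) \<omega> * Dl k \<omega>) \<partial>P) =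
         (\<Sum>k. \<integral>\<omega>. indicator (B \<inter> Ev t (Suc k)) \<omega> * Dl k \<omega> \<partial>P)"
proof -
  define f where "f k \<omega> = indicator (B \<inter> Ev t (Suc k)) \<omega> * Dl k \<omega>" for k \<omega>
  have i: "\<And>k. integrable P (f k)" unfolding f_def
    using B by (intro int_ind Dl_int) auto
  have s: "AE \<omega> in P. summable (\<lambda>k. norm (f k \<omega>))"
    using fin_AE
  proof (rule AE_mp[OF _ AE_I2[OF impI]])
    fix \<omega> assume "\<forall>n::nat. finite {k. tau (Suc k) \<omega> \<le> real n}"
    then have fi: "finite {k. tau (Suc k) \<omega> \<le> t}" by (rule fin_t)
    show "summable (\<lambda>k. norm (f k \<omega>))"
      by (rule summable_finite[OF fi]) (auto simp: f_def Ev_def)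
  qed
  obtain C where C: "\<And>k. (\<integral>\<omega>. \<bar>Dl k \<omega>\<bar> \<partial>P) \<le> C" using Dl_bnd by blast
  have le: "norm (\<integral>\<omega>. norm (f k \<omega>) \<partial>P) \<le> C * measure P (Ev t (Suc k))" for k
  proof -
    have "norm (\<integral>\<omega>. norm (f k \<omega>) \<partial>P) = (\<integral>\<omega>. norm (f k \<omega>) \<partial>P)" by simp
    also have "\<dots> \<le> (\<integral>\<omega>. indicator (Ev t (Suc k)) \<omega> * \<bar>Dl k \<omega>\<bar> \<partial>P)"
    proof (rule integral_mono)
      show "integrable P (\<lambda>\<omega>. norm (f k \<omega>))" using i by auto
      show "integrable P (\<lambda>\<omega>. indicator (Ev t (Suc k)) \<omega> * \<bar>Dl k \<omega>\<bar>)"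
        by (intro int_ind absDl_int) auto
      fix \<omega> show "norm (f k \<omega>) \<le> indicator (Ev t (Suc k)) \<omega> * \<bar>Dl k \<omega>\<bar>"
        by (auto simp: f_def indicator_def abs_mult)
    qed
    also have "\<dots> = measure P (Ev t (Suc k)) * (\<integral>\<omega>. \<bar>Dl k \<omega>\<bar> \<partial>P)" by (rule indep_E)
    also have "\<dots> \<le> measure P (Ev t (Suc k)) * C" by (rule mult_left_mono[OF C]) simp
    finally show ?thesis by (simp add: mult.commute)
  qed
  have sums: "summable (\<lambda>k. (\<integral>\<omega>. norm (f k \<omega>) \<partial>P))"
    by (rule summable_comparison_test[OF _ summable_mult[OF sum_prob[OF t]]]) (use le in blast)
  show "integrable P (\<lambda>\<omega>. \<Sum>k. indicator (B \<inter> Ev t (Suc k)) \<omega> * Dl k \<omega>)"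
    using integrable_suminf[OF i s sums] unfolding f_def .
  show "(\<integral>\<omega>. (\<Sum>k. indicator (B \<inter> Ev t (Suc k)) \<omega> * Dl k \<omega>) \<partial>P) =
         (\<Sum>k. \<integral>\<omega>. indicator (B \<inter> Ev t (Suc k)) \<omega> * Dl k \<omega> \<partial>P)"
    using integral_suminf[OF i s sums] unfolding f_def .
qed

lemma Z_meas[measurable]: "Z t \<in> borel_measurable P"
  unfolding Z_def by measurable

lemma Zrep:
  assumes "\<omega> \<in> space P"
  shows "indicator B \<omega> * Z t \<omega> = indicator B \<omega> * M 0 \<omega> + (\<Sum>k. indicator (B \<inter> Ev t (Suc k)) \<omega> * Dl k \<omega>)"
proof (cases "\<omega> \<in> B")
  case True
  have "(\<lambda>k. indicator (B \<inter> Ev t (Suc k)) \<omega> * Dl k \<omega>) = (\<lambda>k. (M (Suc k) \<omega> - M k \<omega>) * (if tau (Suc k) \<omega> \<le> t then 1 else 0))"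
    using True assms by (auto simp: Ev_def Dl_def indicator_def)
  then show ?thesis using True by (simp add: Z_def)
next
  case False
  then show ?thesis by simp
qed

lemma int_Z:
  assumes t: "0 \<le> t" and B: "B \<in> sets P"
  shows "integrable P (\<lambda>\<omega>. indicator B \<omega> * Z t \<omega>)"
    and "(\<integral>\<omega>. indicator B \<omega> * Z t \<omega> \<partial>P) = (\<integral>\<omega>. indicator B \<omega> * M 0 \<omega> \<partial>P) +
          (\<Sum>k. \<integral>\<omega>. indicator (B \<inter> Ev t (Suc k)) \<omega> * Dl k \<omega> \<partial>P)"
proof -
  have i0: "integrable P (\<lambda>\<omega>. indicator B \<omega> * M 0 \<omega>)" by (rule int_ind[OF B M_int])
  have "integrable P (\<lambda>\<omega>. indicator B \<omega> * M 0 \<omega> + (\<Sum>k. indicator (B \<inter> Ev t (Suc k)) \<omega> * Dl k \<omega>))"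
    by (rule Bochner_Integration.integrable_add[OF i0 sum_int(1)[OF t B]])
  then show "integrable P (\<lambda>\<omega>. indicator B \<omega> * Z t \<omega>)"
    by (subst Bochner_Integration.integrable_cong[OF refl Zrep]) auto
  have "(\<integral>\<omega>. indicator B \<omega> * Z t \<omega> \<partial>P) = (\<integral>\<omega>. indicator B \<omega> * M 0 \<omega> + (\<Sum>k. indicator (B \<inter> Ev t (Suc k)) \<omega> * Dl k \<omega>) \<partial>P)"
    by (rule Bochner_Integration.integral_cong[OF refl Zrep])
  also have "\<dots> = (\<integral>\<omega>. indicator B \<omega> * M 0 \<omega> \<partial>P) + (\<integral>\<omega>. (\<Sum>k. indicator (B \<inter> Ev t (Suc k)) \<omega> * Dl k \<omega>) \<partial>P)"
    by (rule Bochner_Integration.integral_add[OF i0 sum_int(1)[OF t B]])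
  finally show "(\<integral>\<omega>. indicator B \<omega> * Z t \<omega> \<partial>P) = (\<integral>\<omega>. indicator B \<omega> * M 0 \<omega> \<partial>P) +
          (\<Sum>k. \<integral>\<omega>. indicator (B \<inter> Ev t (Suc k)) \<omega> * Dl k \<omega> \<partial>P)"
    using sum_int(2)[OF t B] by simp
qed

lemma GZ_P: "GZ s \<subseteq> sets P"
  unfolding GZ_def by (auto intro: measurable_sets[OF Z_meas])

lemma sets_FZ_P: "sets (FZ s) \<subseteq> sets P"
  unfolding sets_FZ using GZ_P by (rule sets.sigma_sets_subset)

lemma mart_eq:
  assumes s: "0 \<le> s" "s \<le> t" and B: "B \<in> sets (FZ s)"
  shows "(\<integral>\<omega>. indicator B \<omega> * Z t \<omega> \<partial>P) = (\<integral>\<omega>. indicator B \<omega> * Z s \<omega> \<partial>P)"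
proof -
  have t: "0 \<le> t" using s by simp
  have BP: "B \<in> sets P" using B sets_FZ_P by auto
  have trm: "(\<integral>\<omega>. indicator (B \<inter> Ev t (Suc k)) \<omega> * Dl k \<omega> \<partial>P) = (\<integral>\<omega>. indicator (B \<inter> Ev s (Suc k)) \<omega> * Dl k \<omega> \<partial>P)" for k
  proof -
    define Ck where "Ck = (B \<inter> {\<omega>\<in>space P. s < tau (Suc k) \<omega>}) \<inter> (tau (Suc k) -` {..t} \<inter> space (H k))"
    have CH: "Ck \<in> sets (H k)" unfolding Ck_def
      by (intro sets.Int trace[OF B] measurable_sets[OF tau_H]) auto
    have CP: "Ck \<in> sets P" using CH sets_H_P by auto
    have eq: "indicator (B \<inter> Ev t (Suc k)) \<omega> * Dl k \<omega> = indicator (B \<inter> Ev s (Suc k)) \<omega> * Dl k \<omega> + indicator Ck \<omega> * Dl k \<omega>"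
      if "\<omega> \<in> space P" for \<omega>
      using that s by (auto simp: Ck_def Ev_def indicator_def)
    have "(\<integral>\<omega>. indicator (B \<inter> Ev t (Suc k)) \<omega> * Dl k \<omega> \<partial>P) =
        (\<integral>\<omega>. indicator (B \<inter> Ev s (Suc k)) \<omega> * Dl k \<omega> + indicator Ck \<omega> * Dl k \<omega> \<partial>P)"
      by (rule Bochner_Integration.integral_cong[OF refl eq])
    also have "\<dots> = (\<integral>\<omega>. indicator (B \<inter> Ev s (Suc k)) \<omega> * Dl k \<omega> \<partial>P) + (\<integral>\<omega>. indicator Ck \<omega> * Dl k \<omega> \<partial>P)"
      using BP CP by (intro Bochner_Integration.integral_add int_ind Dl_int) auto
    also have "(\<integral>\<omega>. indicator Ck \<omega> * Dl k \<omega> \<partial>P) = 0" by (rule H_zero[OF CH])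
    finally show ?thesis by simp
  qed
  show ?thesis using int_Z(2)[OF t BP] int_Z(2)[OF s(1) BP] trm by simp
qed

lemma sfs_FZ: "sigma_finite_subalgebra P (FZ s)"
proof -
  have "subalgebra P (FZ s)" unfolding subalgebra_def using sets_FZ_P by simp
  then show ?thesis
    apply (intro finite_measure_subalgebra_is_sigma_finite)
    unfolding finite_measure_subalgebra_def finite_measure_subalgebra_axioms_def
    using p.finite_measure_axioms by auto
qed

lemma Z_FZ: "t \<in> {0..} \<Longrightarrow> Z t \<in> borel_measurable (FZ t)"
proof (rule measurableI)
  fix A :: "real set" assume t: "t \<in> {0..}" and A: "A \<in> sets borel"
  have "Z t -` A \<inter> space P \<in> GZ t" unfolding GZ_def using t A by auto
  then show "Z t -` A \<inter> space (FZ t) \<in> sets (FZ t)" unfolding sets_FZ by (simp add: sigma_sets.Basic)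
qed simp

lemma Z_int: assumes "0 \<le> t" shows "integrable P (Z t)"
proof -
  have "integrable P (\<lambda>\<omega>. indicator (space P) \<omega> * Z t \<omega>)" by (rule int_Z(1)[OF assms sets.top])
  then show ?thesis
    using Bochner_Integration.integrable_cong[OF refl, of P "\<lambda>\<omega>. indicator (space P) \<omega> * Z t \<omega>" "Z t"] by auto
qed

lemma sm_main: "step_martingale P Z"
proof -
  have eqF: "natural_filtration P {0..} Z = FZ" by (rule ext) (simp add: FZ_def)
  have m: "martingale_on P FZ {0..} Z"
    unfolding martingale_on_def
  proof (intro conjI ballI impI)
    fix t :: real assume "t \<in> {0..}"
    show "subalgebra P (FZ t)" unfolding subalgebra_def using sets_FZ_P by simp
  next
    fix s t :: real assume "s \<in> {0..}" "t \<in> {0..}" "s \<le> t"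
    then have "GZ s \<subseteq> GZ t" unfolding GZ_def by force
    then show "sets (FZ s) \<subseteq> sets (FZ t)" unfolding sets_FZ by (rule sigma_sets_mono')
  next
    fix t :: real assume "t \<in> {0..}"
    then show "Z t \<in> borel_measurable (FZ t)" by (rule Z_FZ)
    show "integrable P (Z t)" using \<open>t \<in> {0..}\<close> by (intro Z_int) auto
  next
    fix s t :: real assume st: "s \<in> {0..}" "t \<in> {0..}" "s \<le> t"
    interpret sf: sigma_finite_subalgebra P "FZ s" by (rule sfs_FZ)
    show "AE \<omega> in P. real_cond_exp P (FZ s) (Z t) \<omega> = Z s \<omega>"
    proof (rule sf.real_cond_exp_charact)
      fix A assume "A \<in> sets (FZ s)"
      then show "(\<integral>x\<in>A. Z t x \<partial>P) = (\<integral>x\<in>A. Z s x \<partial>P)"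
        using mart_eq[of s t A] st by (simp add: set_lebesgue_integral_def)
    next
      show "integrable P (Z t)" "integrable P (Z s)" using st by (auto intro: Z_int)
      show "Z s \<in> borel_measurable (FZ s)" using st by (intro Z_FZ)
    qed
  qed
  have st: "AE \<omega> in P. \<forall>b\<ge>0. step_on (\<lambda>t. Z t \<omega>) {0..b}"
    using fin_AE
  proof (rule AE_mp[OF _ AE_I2[OF impI]])
    fix \<omega> assume g: "\<forall>n::nat. finite {k. tau (Suc k) \<omega> \<le> real n}"
    show "\<forall>b\<ge>0. step_on (\<lambda>t. Z t \<omega>) {0..b}"
    proof (intro allI impI)
      fix b :: real assume "0 \<le> b"
      define J where "J = (\<lambda>k. tau (Suc k) \<omega>) ` {k. tau (Suc k) \<omega> \<le> b}"
      have fJ: "finite J" unfolding J_def using fin_t[OF g] by simp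
      show "step_on (\<lambda>t. Z t \<omega>) {0..b}" unfolding step_on_def
      proof (intro exI conjI allI impI)
        show "finite J" by (rule fJ)
        fix x y assume xy: "x \<in> {0..b}" "y \<in> {0..b}" "x \<le> y" "{x..y} \<inter> J = {}"
        have "(tau (Suc k) \<omega> \<le> x) = (tau (Suc k) \<omega> \<le> y)" for k
        proof
          assume "tau (Suc k) \<omega> \<le> x" then show "tau (Suc k) \<omega> \<le> y" using xy by simp
        next
          assume y: "tau (Suc k) \<omega> \<le> y"
          show "tau (Suc k) \<omega> \<le> x"
          proof (rule ccontr)
            assume "\<not> tau (Suc k) \<omega> \<le> x"
            then have "tau (Suc k) \<omega> \<in> {x..y}" "tau (Suc k) \<omega> \<in> J"
              using y xy unfolding J_def by auto
            then show False using xy(4) by blast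
          qed
        qed
        then show "Z x \<omega> = Z y \<omega>" unfolding Z_def by simp
      qed
    qed
  qed
  show ?thesis unfolding step_martingale_def eqF using m st by simp
qed

end

theorem mainTheorem1:
  fixes P :: "'a measure" and M :: "nat \<Rightarrow> 'a \<Rightarrow> real" and tau :: "nat \<Rightarrow> 'a \<Rightarrow> real"
  assumes "prob_space P"
    and "martingale_on P (natural_filtration P UNIV M) UNIV M"
    and "\<exists>C. \<forall>i\<ge>1. (\<integral>\<omega>. \<bar>M i \<omega> - M (i - 1) \<omega>\<bar> \<partial>P) \<le> C"
    and "\<forall>k\<ge>1. tau k \<in> borel_measurable P"
    and "\<forall>k\<ge>1. \<forall>\<omega>\<in>space P. 0 < tau k \<omega> \<and> tau k \<omega> \<le> tau (Suc k) \<omega>"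
    and "prob_space.indep_var P
           (PiM {1..} (\<lambda>_. borel)) (\<lambda>\<omega>. \<lambda>k\<in>{1..}. tau k \<omega>)
           (PiM UNIV (\<lambda>_. borel)) (\<lambda>\<omega> n. M n \<omega>)"
    and "\<forall>t\<ge>0. (\<integral>\<^sup>+\<omega>. (\<Sum>k. ennreal (if 1 \<le> k \<and> tau k \<omega> \<le> t then 1 else 0)) \<partial>P) < \<infinity>"
  shows "step_martingale P
           (\<lambda>t \<omega>. M 0 \<omega> + (\<Sum>k. (M (Suc k) \<omega> - M k \<omega>) * (if tau (Suc k) \<omega> \<le> t then 1 else 0)))"
proof -
  interpret s: sm P M tau unfolding sm_def using assms by auto
  show ?thesis using s.sm_main unfolding s.Z_def .
qed

end
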